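(* Let $f,g\in L^2(\mathbb{R})$ and write $V=V(f,g)=U+iW$ with $U,W$ real-valued. Assume that $V(x_0,\omega_0)=0$ and $\det J_V(x_0,\omega_0)\neq 0$, where \[ J_V(x_0,\omega_0)=\begin{pmatrix} U_x(x_0,\omega_0) & U_\omega(x_0,\omega_0)\\ W_x(x_0,\omega_0) & W_\omega(x_0,\omega_0)\end{pmatrix}, \] and let $\psi(x,\omega)=\arg V(x,\omega)$ denote a (local differentiable) phase of $V$. (i) If $V\in C^2(\mathbb{R}^2,\mathbb{R}^2)$, then \[ \lim_{x\to x_0}\frac{\partial\psi}{\partial\omega}(x,\omega_0)=\begin{cases}-\infty, & x\to x_0\text{ from the left},\\ +\infty, & x\to x_0\text{ from the right},\end{cases} \] if $\det J_V(x_0,\omega_0)>0$, and \[ \lim_{x\to x_0}\frac{\partial\psi}{\partial\omega}(x,\omega_0)=\begin{cases}+\infty, & x\to x_0\text{ from the left},\\ -\infty, & x\to x_0\text{ from the right},\end{cases} \] if $\det J_V(x_0,\omega_0)<0$. (ii) If $V\in C^3(\mathbb{R}^2,\mathbb{R}^2)$, then $\lim_{\omega\to\omega_0}\frac{\partial\psi}{\partial\omega}(x_0,\omega)=c'$ for some real number $c'\in\mathbb{R}$.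
   Context: The short-time Fourier transform is $V(f,g)(x,\omega)=\int_{\mathbb{R}} f(t)\overline{g(t-x)}e^{-2\pi i\omega t}\,dt$, regarded as a map $\mathbb{R}^2\to\mathbb{R}^2\cong\mathbb{C}$; $C^k$ refers to real differentiability in $(x,\omega)$ and subscripts denote partial derivatives. At points where $V\neq 0$, a differentiable phase $\psi$ with $V=|V|e^{i\psi}$ exists locally, is unique up to an additive constant in $2\pi\mathbb{Z}$, and its partial derivative is $\frac{\partial\psi}{\partial\omega}=\frac{U W_\omega-W U_\omega}{U^2+W^2}$ (independent of the choice of phase). *)

theory Defs
  imports "HOL-Analysis.Analysis"
begin

definition L2 :: "(real \<Rightarrow> complex) \<Rightarrow> bool" where
  "L2 f \<longleftrightarrow> f \<in> borel_measurable lborel \<and> integrable lborel (\<lambda>t. (norm (f t))\<^sup>2)"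

definition STFT :: "(real \<Rightarrow> complex) \<Rightarrow> (real \<Rightarrow> complex) \<Rightarrow> real \<times> real \<Rightarrow> complex" where
  "STFT f g = (\<lambda>(x, \<omega>). integral\<^sup>L lborel
      (\<lambda>t. f t * cnj (g (t - x)) * exp (- (2 * complex_of_real pi * \<i> * complex_of_real \<omega> * complex_of_real t))))"

definition dx :: "(real \<times> real \<Rightarrow> complex) \<Rightarrow> real \<times> real \<Rightarrow> complex" where
  "dx F = (\<lambda>(x, \<omega>). vector_derivative (\<lambda>s. F (s, \<omega>)) (at x))"

definition dw :: "(real \<times> real \<Rightarrow> complex) \<Rightarrow> real \<times> real \<Rightarrow> complex" where
  "dw F = (\<lambda>(x, \<omega>). vector_derivative (\<lambda>s. F (x, s)) (at \<omega>))"

fun Ck :: "nat \<Rightarrow> (real \<times> real \<Rightarrow> complex) \<Rightarrow> bool" where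
  "Ck 0 F \<longleftrightarrow> continuous_on UNIV F"
| "Ck (Suc k) F \<longleftrightarrow> continuous_on UNIV F
     \<and> (\<forall>x \<omega>. (\<lambda>s. F (s, \<omega>)) differentiable (at x) \<and> (\<lambda>s. F (x, s)) differentiable (at \<omega>))
     \<and> Ck k (dx F) \<and> Ck k (dw F)"

definition detJ :: "(real \<times> real \<Rightarrow> complex) \<Rightarrow> real \<times> real \<Rightarrow> real" where
  "detJ V p = Re (dx V p) * Im (dw V p) - Re (dw V p) * Im (dx V p)"

text \<open>d psi / d omega = (U W_w - W U_w) / (U^2 + W^2), independent of the choice of phase.\<close>
definition phase_dw :: "(real \<times> real \<Rightarrow> complex) \<Rightarrow> real \<times> real \<Rightarrow> real" where
  "phase_dw V p = (Re (V p) * Im (dw V p) - Im (V p) * Re (dw V p)) / ((Re (V p))\<^sup>2 + (Im (V p))\<^sup>2)"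

end

theory Submission
  imports Defs
begin


lemma deriv_quot_lim:
  fixes f :: "real \<Rightarrow> real"
  assumes "(f has_real_derivative D) (at w)" "f w = 0"
  shows "((\<lambda>s. f s / (s - w)) \<longlongrightarrow> D) (at w)"
  using assms by (simp add: has_field_derivative_iff)

lemma second_order:
  fixes f f1 f2 :: "real \<Rightarrow> real"
  assumes d1: "\<And>s. (f has_real_derivative f1 s) (at s)"
    and d2: "\<And>s. (f1 has_real_derivative f2 s) (at s)"
    and c: "isCont f2 w" and z: "f w = 0"
  shows "((\<lambda>s. ((s - w) * f1 s - f s) / (s - w)^2) \<longlongrightarrow> f2 w / 2) (at w)"
proof (rule lhopital)
  have "isCont (\<lambda>s. (s - w) * f1 s - f s) w"
    using DERIV_isCont[OF d1] DERIV_isCont[OF d2] by (intro continuous_intros) auto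
  then show "((\<lambda>s. (s - w) * f1 s - f s) \<longlongrightarrow> 0) (at w)"
    using z by (metis (no_types, lifting) diff_self isCont_def mult_zero_left)
  show "((\<lambda>s. (s - w)^2) \<longlongrightarrow> 0) (at w)"
    by (rule tendsto_eq_intros refl)+ auto
  show "\<forall>\<^sub>F s in at w. (s - w)^2 \<noteq> 0" by (simp add: eventually_at_filter)
  show "\<forall>\<^sub>F s in at w. 2 * (s - w) \<noteq> 0" by (simp add: eventually_at_filter)
  show "\<forall>\<^sub>F s in at w. ((\<lambda>s. (s - w) * f1 s - f s) has_real_derivative (s - w) * f2 s) (at s)"
  proof (intro always_eventually allI)
    fix s
    have "((\<lambda>s. (s - w) * f1 s - f s) has_real_derivative (1 * f1 s + (s - w) * f2 s) - f1 s) (at s)"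
    proof (rule DERIV_diff[OF _ d1])
      have a: "((\<lambda>s. s - w) has_real_derivative 1) (at s)"
        using DERIV_diff[OF DERIV_ident DERIV_const] by simp
      show "((\<lambda>s. (s - w) * f1 s) has_real_derivative 1 * f1 s + (s - w) * f2 s) (at s)" using DERIV_mult'[OF a d2] by (simp add: algebra_simps)
    qed
    then show "((\<lambda>s. (s - w) * f1 s - f s) has_real_derivative (s - w) * f2 s) (at s)" by simp
  qed
  show "\<forall>\<^sub>F s in at w. ((\<lambda>s. (s - w)^2) has_real_derivative 2 * (s - w)) (at s)"
    by (intro always_eventually allI) (auto intro!: derivative_eq_intros)
  have "((\<lambda>s. f2 s / 2) \<longlongrightarrow> f2 w / 2) (at w)"
    using c by (intro tendsto_intros) (simp_all add: isCont_def)
  then show "((\<lambda>s. (s - w) * f2 s / (2 * (s - w))) \<longlongrightarrow> f2 w / 2) (at w)"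
    by (rule Lim_transform_eventually) (auto simp: eventually_at_filter field_simps intro!: always_eventually)
qed

lemma sign_pos:
  fixes P :: "real \<Rightarrow> real"
  assumes "((\<lambda>y. (y - x0) * P y) \<longlongrightarrow> L) (at x0)" "L > 0"
  shows "filterlim P at_bot (at_left x0) \<and> filterlim P at_top (at_right x0)"
proof
  have l: "((\<lambda>y. (y - x0) * P y) \<longlongrightarrow> L) (at_left x0)" "((\<lambda>y. (y - x0) * P y) \<longlongrightarrow> L) (at_right x0)"
    using assms(1) filterlim_at_split by blast+
  have el: "eventually (\<lambda>y. y < x0) (at_left x0)"
    by (simp add: eventually_at_left_field) (meson lt_ex)
  have er: "eventually (\<lambda>y. y > x0) (at_right x0)"
    by (simp add: eventually_at_right_less)
  have il: "filterlim (\<lambda>y. inverse (y - x0)) at_bot (at_left x0)"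
    apply (rule filterlim_inverse_at_bot)
    apply (rule tendsto_eq_intros refl)+ apply simp
    using el by (rule eventually_mono) simp
  have ir: "filterlim (\<lambda>y. inverse (y - x0)) at_top (at_right x0)"
    apply (rule filterlim_inverse_at_top)
    apply (rule tendsto_eq_intros refl)+ apply simp
    using er by (rule eventually_mono) simp
  have "filterlim (\<lambda>y. (y - x0) * P y * inverse (y - x0)) at_bot (at_left x0)"
    by (rule filterlim_tendsto_pos_mult_at_bot[OF l(1) assms(2) il])
  then show "filterlim P at_bot (at_left x0)"
    by (rule filterlim_mono_eventually) (auto intro: eventually_mono[OF el])
  have "filterlim (\<lambda>y. (y - x0) * P y * inverse (y - x0)) at_top (at_right x0)"
    by (rule filterlim_tendsto_pos_mult_at_top[OF l(2) assms(2) ir])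
  then show "filterlim P at_top (at_right x0)"
    by (rule filterlim_mono_eventually) (auto intro: eventually_mono[OF er])
qed

lemma sign_neg:
  fixes P :: "real \<Rightarrow> real"
  assumes "((\<lambda>y. (y - x0) * P y) \<longlongrightarrow> L) (at x0)" "L < 0"
  shows "filterlim P at_top (at_left x0) \<and> filterlim P at_bot (at_right x0)"
proof -
  have "((\<lambda>y. (y - x0) * (- P y)) \<longlongrightarrow> -L) (at x0)"
    using tendsto_minus[OF assms(1)] by simp
  from sign_pos[OF this] assms(2) show ?thesis
    by (simp add: filterlim_uminus_at_bot filterlim_uminus_at_top[symmetric])
qed


lemma alg1:
  fixes h ru iu rw iw :: real
  assumes "h \<noteq> 0"
  shows "h * ((ru*iw - iu*rw)/(ru^2+iu^2)) = ((ru/h)*iw - (iu/h)*rw)/((ru/h)^2+(iu/h)^2)"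
proof -
  have 1: "(ru/h)^2+(iu/h)^2 = (ru^2+iu^2)/h^2" by (simp add: power_divide add_divide_distrib)
  have 2: "(ru/h)*iw - (iu/h)*rw = (ru*iw - iu*rw)/h" by (simp add: diff_divide_distrib)
  show ?thesis unfolding 1 2 using assms by (simp add: power2_eq_square)
qed
lemma alg2:
  fixes h rv iv rd id :: real
  assumes "h \<noteq> 0"
  shows "(rv*id - iv*rd)/(rv^2+iv^2) = ((rv/h)*((h*id - iv)/h^2) - (iv/h)*((h*rd - rv)/h^2))/((rv/h)^2+(iv/h)^2)"
proof -
  have 1: "(rv/h)^2+(iv/h)^2 = (rv^2+iv^2)/h^2" by (simp add: power_divide add_divide_distrib)
  have 2: "(rv/h)*((h*id - iv)/h^2) - (iv/h)*((h*rd - rv)/h^2) = (rv*id - iv*rd)/h^2"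
    using assms by (simp add: field_simps power2_eq_square)
  show ?thesis unfolding 1 2 using assms by simp
qed

lemma vd_Re: "(u has_vector_derivative a) (at x) \<Longrightarrow> ((\<lambda>s. Re (u s)) has_real_derivative Re a) (at x)"
  unfolding has_real_derivative_iff_has_vector_derivative by (rule bounded_linear.has_vector_derivative[OF bounded_linear_Re])
lemma vd_Im: "(u has_vector_derivative a) (at x) \<Longrightarrow> ((\<lambda>s. Im (u s)) has_real_derivative Im a) (at x)"
  unfolding has_real_derivative_iff_has_vector_derivative by (rule bounded_linear.has_vector_derivative[OF bounded_linear_Im])


lemma CkD:
  assumes "Ck (Suc k) F"
  shows "continuous_on UNIV F"
    "((\<lambda>s. F (s, w)) has_vector_derivative dx F (x, w)) (at x)"
    "((\<lambda>s. F (x, s)) has_vector_derivative dw F (x, w)) (at w)"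
    "Ck k (dx F)" "Ck k (dw F)"
proof -
  have h: "continuous_on UNIV F" "\<And>x w. (\<lambda>s. F (s, w)) differentiable (at x)"
    "\<And>x w. (\<lambda>s. F (x, s)) differentiable (at w)" "Ck k (dx F)" "Ck k (dw F)"
    using assms by simp_all
  show "continuous_on UNIV F" "Ck k (dx F)" "Ck k (dw F)" using h by simp_all
  show "((\<lambda>s. F (s, w)) has_vector_derivative dx F (x, w)) (at x)"
    unfolding dx_def using h(2)[of w x] vector_derivative_works by simp blast
  show "((\<lambda>s. F (x, s)) has_vector_derivative dw F (x, w)) (at w)"
    unfolding dw_def using h(3)[of x w] vector_derivative_works by simp blast
qed

lemma Ck_cont: "Ck k F \<Longrightarrow> continuous_on UNIV F"
  by (cases k) auto

lemma cont1: "continuous_on UNIV (G :: real \<times> real \<Rightarrow> complex) \<Longrightarrow> isCont (\<lambda>s. G (s, w)) x"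
proof -
  assume a: "continuous_on UNIV G"
  have "continuous_on UNIV (\<lambda>s. G (s, w))"
    by (rule continuous_on_compose2[OF a]) (auto intro!: continuous_intros)
  then show ?thesis by (simp add: continuous_on_eq_continuous_at)
qed
lemma cont2: "continuous_on UNIV (G :: real \<times> real \<Rightarrow> complex) \<Longrightarrow> isCont (\<lambda>s. G (x, s)) w"
proof -
  assume a: "continuous_on UNIV G"
  have "continuous_on UNIV (\<lambda>s. G (x, s))"
    by (rule continuous_on_compose2[OF a]) (auto intro!: continuous_intros)
  then show ?thesis by (simp add: continuous_on_eq_continuous_at)
qed

lemma part1:
  assumes ck: "Ck (Suc (Suc 0)) F" and z: "F (x0, w0) = 0" and dj: "detJ F (x0, w0) \<noteq> 0"
  shows "((\<lambda>x. (x - x0) * phase_dw F (x, w0)) \<longlongrightarrow>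
     detJ F (x0, w0) / ((Re (dx F (x0, w0)))^2 + (Im (dx F (x0, w0)))^2)) (at x0)"
proof -
  define a where "a = dx F (x0, w0)"
  define b where "b = dw F (x0, w0)"
  have va: "((\<lambda>s. F (s, w0)) has_vector_derivative a) (at x0)" using CkD(2)[OF ck] a_def by blast
  have qU: "((\<lambda>s. Re (F (s, w0)) / (s - x0)) \<longlongrightarrow> Re a) (at x0)"
    by (rule deriv_quot_lim[OF vd_Re[OF va]]) (simp add: z)
  have qW: "((\<lambda>s. Im (F (s, w0)) / (s - x0)) \<longlongrightarrow> Im a) (at x0)"
    by (rule deriv_quot_lim[OF vd_Im[OF va]]) (simp add: z)
  have cb: "isCont (\<lambda>s. dw F (s, w0)) x0"
    using CkD(5)[OF ck] by (intro cont1) (simp)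
  have cbR: "((\<lambda>s. Re (dw F (s, w0))) \<longlongrightarrow> Re b) (at x0)"
    using cb unfolding b_def isCont_def by (intro tendsto_intros)
  have cbI: "((\<lambda>s. Im (dw F (s, w0))) \<longlongrightarrow> Im b) (at x0)"
    using cb unfolding b_def isCont_def by (intro tendsto_intros)
  have dJ: "detJ F (x0, w0) = Re a * Im b - Im a * Re b"
    unfolding detJ_def a_def b_def by simp
  have nz: "(Re a)^2 + (Im a)^2 \<noteq> 0"
  proof
    assume "(Re a)^2 + (Im a)^2 = 0"
    then have "Re a = 0" "Im a = 0" by (auto simp: sum_power2_eq_zero_iff)
    then show False using dj dJ by simp
  qed
  have lim: "((\<lambda>s. ((Re (F (s, w0)) / (s - x0)) * Im (dw F (s, w0)) - (Im (F (s, w0)) / (s - x0)) * Re (dw F (s, w0)))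
      / ((Re (F (s, w0)) / (s - x0))^2 + (Im (F (s, w0)) / (s - x0))^2)) \<longlongrightarrow>
      (Re a * Im b - Im a * Re b) / ((Re a)^2 + (Im a)^2)) (at x0)"
    by (rule tendsto_divide[OF tendsto_diff[OF tendsto_mult[OF qU cbI] tendsto_mult[OF qW cbR]] tendsto_add[OF tendsto_power[OF qU] tendsto_power[OF qW]] nz])
  show ?thesis
    unfolding dJ a_def[symmetric]
  proof (rule Lim_transform_eventually[OF lim])
    show "\<forall>\<^sub>F x in at x0. ((Re (F (x, w0)) / (x - x0)) * Im (dw F (x, w0)) - (Im (F (x, w0)) / (x - x0)) * Re (dw F (x, w0)))
      / ((Re (F (x, w0)) / (x - x0))^2 + (Im (F (x, w0)) / (x - x0))^2) = (x - x0) * phase_dw F (x, w0)"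
      unfolding phase_dw_def eventually_at_filter
      by (intro always_eventually allI impI, rule alg1[symmetric]) simp
  qed
qed

lemma part2:
  assumes ck: "Ck (Suc (Suc (Suc 0))) F" and z: "F (x0, w0) = 0" and dj: "detJ F (x0, w0) \<noteq> 0"
  shows "\<exists>c. ((\<lambda>w. phase_dw F (x0, w)) \<longlongrightarrow> c) (at w0)"
proof -
  define d where "d = (\<lambda>s. dw F (x0, s))"
  define dd where "dd = (\<lambda>s. dw (dw F) (x0, s))"
  have vd: "\<And>s. ((\<lambda>s. F (x0, s)) has_vector_derivative d s) (at s)" using CkD(3)[OF ck] d_def by blast
  have ck2: "Ck (Suc (Suc 0)) (dw F)" using CkD(5)[OF ck] .
  have dd': "\<And>s. (d has_vector_derivative dd s) (at s)" using CkD(3)[OF ck2] d_def dd_def by simp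
  have cdd: "isCont dd w0"
    using CkD(5)[OF ck2] unfolding dd_def by (intro cont2) (simp add: Ck_cont)
  have cR: "isCont (\<lambda>s. Re (dd s)) w0" using cdd by (rule bounded_linear.isCont[OF bounded_linear_Re])
  have cI: "isCont (\<lambda>s. Im (dd s)) w0" using cdd by (rule bounded_linear.isCont[OF bounded_linear_Im])
  have sR: "((\<lambda>s. ((s - w0) * Re (d s) - Re (F (x0, s))) / (s - w0)^2) \<longlongrightarrow> Re (dd w0) / 2) (at w0)"
    by (rule second_order[OF vd_Re[OF vd] vd_Re[OF dd'] cR]) (simp add: z)
  have sI: "((\<lambda>s. ((s - w0) * Im (d s) - Im (F (x0, s))) / (s - w0)^2) \<longlongrightarrow> Im (dd w0) / 2) (at w0)"
    by (rule second_order[OF vd_Im[OF vd] vd_Im[OF dd'] cI]) (simp add: z)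
  have qR: "((\<lambda>s. Re (F (x0, s)) / (s - w0)) \<longlongrightarrow> Re (d w0)) (at w0)"
    by (rule deriv_quot_lim[OF vd_Re[OF vd]]) (simp add: z)
  have qI: "((\<lambda>s. Im (F (x0, s)) / (s - w0)) \<longlongrightarrow> Im (d w0)) (at w0)"
    by (rule deriv_quot_lim[OF vd_Im[OF vd]]) (simp add: z)
  have dJ: "detJ F (x0, w0) = Re (dx F (x0, w0)) * Im (d w0) - Re (d w0) * Im (dx F (x0, w0))"
    unfolding detJ_def d_def by simp
  have nz: "(Re (d w0))^2 + (Im (d w0))^2 \<noteq> 0"
  proof
    assume "(Re (d w0))^2 + (Im (d w0))^2 = 0"
    then have "Re (d w0) = 0" "Im (d w0) = 0" by (auto simp: sum_power2_eq_zero_iff)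
    then show False using dj dJ by simp
  qed
  have lim: "((\<lambda>s. ((Re (F (x0, s)) / (s - w0)) * (((s - w0) * Im (d s) - Im (F (x0, s))) / (s - w0)^2)
        - (Im (F (x0, s)) / (s - w0)) * (((s - w0) * Re (d s) - Re (F (x0, s))) / (s - w0)^2))
      / ((Re (F (x0, s)) / (s - w0))^2 + (Im (F (x0, s)) / (s - w0))^2)) \<longlongrightarrow>
      (Re (d w0) * (Im (dd w0) / 2) - Im (d w0) * (Re (dd w0) / 2)) / ((Re (d w0))^2 + (Im (d w0))^2)) (at w0)"
    by (rule tendsto_divide[OF tendsto_diff[OF tendsto_mult[OF qR sI] tendsto_mult[OF qI sR]] tendsto_add[OF tendsto_power[OF qR] tendsto_power[OF qI]] nz])
  have "((\<lambda>w. phase_dw F (x0, w)) \<longlongrightarrow>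
      (Re (d w0) * (Im (dd w0) / 2) - Im (d w0) * (Re (dd w0) / 2)) / ((Re (d w0))^2 + (Im (d w0))^2)) (at w0)"
  proof (rule Lim_transform_eventually[OF lim])
    show "\<forall>\<^sub>F s in at w0. ((Re (F (x0, s)) / (s - w0)) * (((s - w0) * Im (d s) - Im (F (x0, s))) / (s - w0)^2)
        - (Im (F (x0, s)) / (s - w0)) * (((s - w0) * Re (d s) - Re (F (x0, s))) / (s - w0)^2))
      / ((Re (F (x0, s)) / (s - w0))^2 + (Im (F (x0, s)) / (s - w0))^2) = phase_dw F (x0, s)"
      unfolding phase_dw_def eventually_at_filter d_def
      by (intro always_eventually allI impI, rule alg2[symmetric]) simp
  qed
  then show ?thesis by blast
qed



theorem mainTheorem7:
  fixes f g :: "real \<Rightarrow> complex" and x0 \<omega>0 :: real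
  assumes "L2 f" and "L2 g"
    and "STFT f g (x0, \<omega>0) = 0"
    and "detJ (STFT f g) (x0, \<omega>0) \<noteq> 0"
  shows "(Ck 2 (STFT f g) \<longrightarrow>
           (detJ (STFT f g) (x0, \<omega>0) > 0 \<longrightarrow>
              filterlim (\<lambda>x. phase_dw (STFT f g) (x, \<omega>0)) at_bot (at_left x0) \<and>
              filterlim (\<lambda>x. phase_dw (STFT f g) (x, \<omega>0)) at_top (at_right x0)) \<and>
           (detJ (STFT f g) (x0, \<omega>0) < 0 \<longrightarrow>
              filterlim (\<lambda>x. phase_dw (STFT f g) (x, \<omega>0)) at_top (at_left x0) \<and>
              filterlim (\<lambda>x. phase_dw (STFT f g) (x, \<omega>0)) at_bot (at_right x0)))
       \<and> (Ck 3 (STFT f g) \<longrightarrow>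
           (\<exists>c::real. ((\<lambda>\<omega>. phase_dw (STFT f g) (x0, \<omega>)) \<longlongrightarrow> c) (at \<omega>0)))"
proof (intro conjI impI)
  let ?V = "STFT f g"
  assume c2: "Ck 2 ?V"
  then have c2': "Ck (Suc (Suc 0)) ?V" by (simp add: numeral_2_eq_2)
  have l: "((\<lambda>x. (x - x0) * phase_dw ?V (x, \<omega>0)) \<longlongrightarrow>
     detJ ?V (x0, \<omega>0) / ((Re (dx ?V (x0, \<omega>0)))^2 + (Im (dx ?V (x0, \<omega>0)))^2)) (at x0)"
    by (rule part1[OF c2' assms(3,4)])
  have pd: "(Re (dx ?V (x0, \<omega>0)))^2 + (Im (dx ?V (x0, \<omega>0)))^2 > 0"
  proof -
    have "(Re (dx ?V (x0, \<omega>0)))^2 + (Im (dx ?V (x0, \<omega>0)))^2 \<noteq> 0"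
      using assms(4) by (auto simp: detJ_def sum_power2_eq_zero_iff)
    then show ?thesis by (simp add: add_pos_nonneg sum_power2_gt_zero_iff)
  qed
  {
    assume "detJ ?V (x0, \<omega>0) > 0"
    then have "detJ ?V (x0, \<omega>0) / ((Re (dx ?V (x0, \<omega>0)))^2 + (Im (dx ?V (x0, \<omega>0)))^2) > 0"
      using pd by simp
    from sign_pos[OF l this]
    show "filterlim (\<lambda>x. phase_dw ?V (x, \<omega>0)) at_bot (at_left x0)"
      "filterlim (\<lambda>x. phase_dw ?V (x, \<omega>0)) at_top (at_right x0)" by auto
  }
  {
    assume "detJ ?V (x0, \<omega>0) < 0"
    then have "detJ ?V (x0, \<omega>0) / ((Re (dx ?V (x0, \<omega>0)))^2 + (Im (dx ?V (x0, \<omega>0)))^2) < 0"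
      using pd by (simp add: divide_neg_pos)
    from sign_neg[OF l this]
    show "filterlim (\<lambda>x. phase_dw ?V (x, \<omega>0)) at_top (at_left x0)"
      "filterlim (\<lambda>x. phase_dw ?V (x, \<omega>0)) at_bot (at_right x0)" by auto
  }
next
  assume c3: "Ck 3 (STFT f g)"
  then have "Ck (Suc (Suc (Suc 0))) (STFT f g)" by (simp add: numeral_3_eq_3)
  from part2[OF this assms(3,4)]
  show "\<exists>c::real. ((\<lambda>\<omega>. phase_dw (STFT f g) (x0, \<omega>)) \<longlongrightarrow> c) (at \<omega>0)" .
qed


end
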